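(* Let $m\ge7$ with $m\equiv3\pmod4$, let $N=3^m-1$ and $v=\frac{3^m-1}{2}-3^{(m-1)/2}-1$. Then $\gcd(v,N)=1$, and for every integer $i$ with $0\le i\le\frac{3^{(m-1)/2}+1}{4}+1$, the $3$-weight of $v(1+2i)\bmod N$ is congruent to $1$ modulo $4$ (i.e. the $3$-adic digit vector of $v(1+2i)\bmod N$ lies in $S_1(m)$).
   Context: For an integer $i$, $i\bmod N$ is the unique $s\in\{0,\dots,N-1\}$ with $N\mid i-s$. For $0\le s\le 3^m-1$ with $3$-adic expansion $s=\sum_{j=0}^{m-1}s_j3^j$, $s_j\in\{0,1,2\}$, the $3$-weight is $\mathrm{wt}_3(s)=\sum_j s_j$. $S_j(m)=\{(i_0,\dots,i_{m-1})\in\{0,1,2\}^m:\sum i_k\equiv j\pmod 4\}$. *)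

theory Defs
  imports Complex_Main
begin

definition wt3 :: "nat \<Rightarrow> nat \<Rightarrow> nat" where
  "wt3 m s = (\<Sum>j<m. (s div 3 ^ j) mod 3)"

end

theory Submission
  imports Defs
begin

lemma wt3_Suc: "wt3 (Suc n) y = y mod 3 + wt3 n (y div 3)"
  unfolding wt3_def sum.lessThan_Suc_shift by (simp add: div_mult2_eq)

lemma wt3_top: "wt3 (Suc n) y = wt3 n y + (y div 3^n) mod 3"
  by (simp add: wt3_def)

lemma wt3_0 [simp]: "wt3 0 y = 0" "wt3 n 0 = 0"
  by (simp_all add: wt3_def)

lemma dm3: "b < 3 \<Longrightarrow> (3*a+b) mod 3 = b \<and> (3*a+b) div 3 = (a::nat)"
  by simp

lemma wt3_split: "y < 3^a \<Longrightarrow> wt3 (a+b) (x*3^a+y) = wt3 b x + wt3 a y"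
proof (induction a arbitrary: y)
  case 0 then show ?case by simp
next
  case (Suc a)
  have ee: "x*3^Suc a + y = 3*(x*3^a + y div 3) + y mod 3" by simp
  have e1: "(x*3^Suc a + y) mod 3 = y mod 3" unfolding ee using dm3 by simp
  have e2: "(x*3^Suc a + y) div 3 = x*3^a + y div 3" unfolding ee using dm3 by simp
  have "y div 3 < 3^a" using Suc.prems by auto
  then show ?case using Suc.IH[of "y div 3"]
    by (simp only: add_Suc wt3_Suc e1 e2)
qed

lemma par_aux: "(w::nat) mod 2 = q mod 2 \<Longrightarrow> (r + w) mod 2 = (3*q+r) mod 2"
  by presburger

lemma wt3_par: "y < 3^n \<Longrightarrow> wt3 n y mod 2 = y mod 2"
proof (induction n arbitrary: y)
  case 0 then show ?case by simp
next
  case (Suc n)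
  have "y div 3 < 3^n" using Suc.prems by auto
  from par_aux[OF Suc.IH[OF this], of "y mod 3"] show ?case unfolding wt3_Suc by simp
qed

lemma wt3_compl: "y < 3^n \<Longrightarrow> wt3 n (3^n - 1 - y) + wt3 n y = 2*n"
proof (induction n arbitrary: y)
  case 0 then show ?case by simp
next
  case (Suc n)
  define P :: nat where "P = 3^n"
  have q: "y div 3 < P" using Suc.prems by (auto simp: P_def)
  have yy: "y = 3 * (y div 3) + y mod 3" by simp
  have r: "y mod 3 < 3" by simp
  have z: "3^(Suc n) - 1 - y = 3*(P - 1 - y div 3) + (2 - y mod 3)"
    using q r yy unfolding P_def[symmetric] power_Suc P_def[symmetric] by linarith
  have zm: "(3^(Suc n) - 1 - y) mod 3 = 2 - y mod 3" unfolding z by (rule conjunct1[OF dm3]) simp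
  have zd: "(3^(Suc n) - 1 - y) div 3 = P - 1 - y div 3" unfolding z by (rule conjunct2[OF dm3]) simp
  show ?case unfolding wt3_Suc zm zd using Suc.IH[OF q[unfolded P_def]] unfolding P_def by simp
qed

lemma wt3_small: "wt3 (Suc (Suc n)) 1 = 1" "wt3 (Suc (Suc n)) 2 = 2"
   "wt3 (Suc (Suc n)) 3 = 1" "wt3 (Suc (Suc n)) 4 = 2" "wt3 1 1 = 1"
  by (simp_all add: wt3_Suc)

lemma wt3_11 [simp]: "wt3 (Suc 0) (Suc 0) = Suc 0" by (simp add: wt3_def)

lemma lemma42_aux:
  fixes k B j x :: nat
  assumes k3: "k \<ge> 3" and hB: "3^k = 2*B+1" and oB: "odd B"
    and oj: "odd j" and jB: "j \<le> B + 4" and j1: "j \<ge> 1"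
    and xe: "x + (2*B+2)*j = 6*B*B+6*B+1"
  shows "wt3 (2*k+1) x mod 4 = 1"
proof -
  have B13: "B \<ge> 13"
  proof -
    have "(3::nat)^3 \<le> 3^k" using k3 by (rule power_increasing) simp
    then show ?thesis using hB by simp
  qed
  have mk: "2*k+1 = k + (k+1)" by simp
  define k' where "k' = k - 2"
  have kk: "k = Suc (Suc k')" using k3 by (simp add: k'_def)
  show ?thesis
  proof (cases "j \<le> B")
    case True
    define c where "c = B - j"
    have Bc: "B = c + j" using True c_def by simp
    have ch: "c < 3^k" using hB c_def by simp
    have "(1*3^k+c)*3^k+c + (2*B+2)*j = 6*B*B+6*B+1"
      unfolding hB Bc by (simp add: algebra_simps)
    then have val: "x = (1*3^k + c)*3^k + c" using xe by linarith
    have w1: "wt3 (k+1) (1*3^k + c) = 1 + wt3 k c"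
      using wt3_split[OF ch, of 1 1] by (simp add: wt3_Suc)
    have "wt3 (2*k+1) x = 1 + 2 * wt3 k c"
      unfolding val mk wt3_split[OF ch] w1 by simp
    moreover have "wt3 k c mod 2 = 0" using wt3_par[OF ch] Bc oB oj by presburger
    ultimately show ?thesis by presburger
  next
    case False
    define b where "b = B - 1"
    have bB: "B = Suc b" using B13 by (simp add: b_def)
    have "j = B + 2 \<or> j = B + 4" using False jB oj oB by presburger
    then show ?thesis
    proof
      assume jd: "j = B + 2"
      define e where "e = 2*b"
      have "e*(3^k) + (e+1) + (2*B+2)*j = 6*B*B+6*B+1"
        unfolding hB jd bB e_def by (simp add: algebra_simps)
      then have val: "x = e*3^k + (e+1)" using xe by linarith
      have e1: "e + 1 < 3^k" "e < 3^k" using hB bB e_def by simp_all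
      have ee: "e = 3^k - 1 - 2" "e + 1 = 3^k - 1 - 1" using hB bB e_def by simp_all
      have t: "wt3 (k+1) e = wt3 k e" using e1 by (simp add: wt3_top)
      have c1: "wt3 k e + 2 = 2*k"
      proof -
        have "wt3 k (3^k-1-2) + wt3 k 2 = 2*k" by (rule wt3_compl) (use hB B13 in simp)
        moreover have "wt3 k 2 = 2" unfolding kk by (rule wt3_small)
        ultimately show ?thesis using ee(1) by simp
      qed
      have c2: "wt3 k (e+1) + 1 = 2*k"
      proof -
        have "wt3 k (3^k-1-1) + wt3 k 1 = 2*k" by (rule wt3_compl) (use hB B13 in simp)
        moreover have "wt3 k 1 = 1" unfolding kk by (rule wt3_small)
        ultimately show ?thesis using ee(2) by simp
      qed
      have "wt3 (2*k+1) x = wt3 k e + wt3 k (e+1)"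
        unfolding val mk wt3_split[OF e1(1)] t by simp
      then show ?thesis using c1 c2 k3 by presburger
    next
      assume jd: "j = B + 4"
      define e where "e = 2*b - 2"
      have b6: "b \<ge> 12" using B13 bB by simp
      have "e*(3^k) + (e+1) + (2*B+2)*j = 6*B*B+6*B+1"
      proof -
        define c where "c = b - 2"
        have "b = c + 2" using b6 by (simp add: c_def)
        then show ?thesis unfolding hB jd bB e_def by (simp add: algebra_simps)
      qed
      then have val: "x = e*3^k + (e+1)" using xe by linarith
      have e1: "e + 1 < 3^k" "e < 3^k" using hB bB e_def by simp_all
      have ee: "e = 3^k - 1 - 4" "e + 1 = 3^k - 1 - 3" using hB bB e_def b6 by simp_all
      have t: "wt3 (k+1) e = wt3 k e" using e1 by (simp add: wt3_top)
      have c1: "wt3 k e + 2 = 2*k"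
      proof -
        have "wt3 k (3^k-1-4) + wt3 k 4 = 2*k" by (rule wt3_compl) (use hB B13 in simp)
        moreover have "wt3 k 4 = 2" unfolding kk by (rule wt3_small)
        ultimately show ?thesis using ee(1) by simp
      qed
      have c2: "wt3 k (e+1) + 1 = 2*k"
      proof -
        have "wt3 k (3^k-1-3) + wt3 k 3 = 2*k" by (rule wt3_compl) (use hB B13 in simp)
        moreover have "wt3 k 3 = 1" unfolding kk by (rule wt3_small)
        ultimately show ?thesis using ee(2) by simp
      qed
      have "wt3 (2*k+1) x = wt3 k e + wt3 k (e+1)"
        unfolding val mk wt3_split[OF e1(1)] t by simp
      then show ?thesis using c1 c2 k3 by presburger
    qed
  qed
qed


theorem lemma42:
  fixes m :: nat
  assumes "m \<ge> 7" and "m mod 4 = 3"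
  defines "N \<equiv> (3::int) ^ m - 1"
      and "v \<equiv> ((3::int) ^ m - 1) div 2 - 3 ^ ((m - 1) div 2) - 1"
  shows "gcd v N = 1 \<and>
    (\<forall>i::int. 0 \<le> i \<and> real_of_int i \<le> ((3::real) ^ ((m - 1) div 2) + 1) / 4 + 1 \<longrightarrow>
       wt3 m (nat ((v * (1 + 2 * i)) mod N)) mod 4 = 1)"
proof -
  define k where "k = (m - 1) div 2"
  have mk: "m = 2*k+1" using assms(2) unfolding k_def by presburger
  have k3: "k \<ge> 3" using assms(1,2) unfolding k_def by presburger
  define t where "t = k div 2"
  have kt: "k = 2*t+1" using assms(2) unfolding t_def k_def by presburger
  define B where "B = ((3::nat)^k - 1) div 2"
  have odd3: "odd ((3::nat)^k)" by simp
  have hB: "(3::nat)^k = 2*B+1" using odd3 unfolding B_def by presburger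
  have m4: "(3::nat)^k mod 4 = 3"
  proof -
    have "(9::nat)^t mod 4 = (9 mod 4)^t mod 4" by (rule power_mod[symmetric])
    then have "(9::nat)^t mod 4 = 1" by simp
    moreover have "(3::nat)^k = 3 * 9^t" unfolding kt by (simp add: power_mult)
    moreover have "(3::nat)*9^t mod 4 = 3 * (9^t mod 4) mod 4" by (rule mod_mult_right_eq[symmetric])
    ultimately show ?thesis by simp
  qed
  have oB: "odd B" using m4 hB by presburger
  have B13: "B \<ge> 13"
  proof -
    have "(3::nat)^3 \<le> 3^k" using k3 by (rule power_increasing) simp
    then show ?thesis using hB by simp
  qed
  define b :: int where "b = int B"
  have hBi: "(3::int)^k = 2*b+1" unfolding b_def using hB by (metis of_nat_numeral of_nat_power of_nat_add of_nat_mult of_nat_1)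
  have pm: "(3::int)^m = 3*(2*b+1)^2" unfolding mk hBi[symmetric] by (simp add: power_mult power_add power2_eq_square mult.commute)
  define M :: int where "M = 6*b*b+6*b+1"
  have Ne: "N = 2*M" unfolding N_def pm M_def by (simp add: algebra_simps power2_eq_square)
  have Me: "((3::int) ^ m - 1) div 2 = M" unfolding N_def[symmetric] Ne by simp
  have ve: "v = 6*b*b+4*b-1" unfolding v_def Me k_def[symmetric] hBi M_def by simp
  have b13: "b \<ge> 13" using B13 unfolding b_def by simp
  have part1: "gcd v N = 1"
  proof -
    define g where "g = gcd v N"
    have "2 = N*(1-3*b) + v*(6*b)" unfolding Ne M_def ve by (simp add: algebra_simps)
    then have g2: "g dvd 2" unfolding g_def by (metis dvd_add dvd_mult2 gcd_dvd1 gcd_dvd2)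
    have "v = 2*(3*b*b+2*b) - 1" unfolding ve by (simp add: algebra_simps)
    then have ov: "odd v" by presburger
    have "odd g" using ov unfolding g_def by (meson dvd_trans gcd_dvd1)
    moreover have "g \<ge> 0" unfolding g_def by simp
    moreover have "g \<le> 2" using g2 by (simp add: zdvd_imp_le)
    ultimately show ?thesis unfolding g_def by presburger
  qed
  have part2: "wt3 m (nat ((v * (1 + 2 * i)) mod N)) mod 4 = 1"
    if i0: "0 \<le> i" and ir: "real_of_int i \<le> ((3::real) ^ ((m - 1) div 2) + 1) / 4 + 1" for i :: int
  proof -
    have "(3::real)^k = real_of_int (2*b+1)" using hBi by (metis of_int_numeral of_int_power)
    then have "real_of_int i \<le> (real_of_int (2*b+1) + 1) / 4 + 1" using ir unfolding k_def by simp
    then have "real_of_int (4*i) \<le> real_of_int (2*b+6)" by (simp add: field_simps)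
    then have i4: "4*i \<le> 2*b+6" by (simp only: of_int_le_iff)
    define R where "R = M - (2*b+2)*(1+2*i)"
    have vi: "v*(1+2*i) = R + i*N" unfolding R_def ve Ne M_def by (simp add: algebra_simps)
    have P1: "(2*b+2)*(1+2*i) \<le> (2*b+2)*(b+4)" using i4 b13 by (intro mult_left_mono) auto
    have P2: "b*b \<ge> 13*b" using b13 by (intro mult_right_mono) auto
    have P3: "M - (2*b+2)*(b+4) = 4*(b*b) - 4*b - 7" unfolding M_def by (simp add: algebra_simps)
    have R0: "R \<ge> 0" unfolding R_def using P1 P2 P3 b13 by linarith
    have "(2*b+2)*(1+2*i) \<ge> 0" using i0 b13 by simp
    moreover have "M > 0" unfolding M_def using b13 by (simp add: add_pos_nonneg)
    ultimately have R1: "R < N" unfolding R_def Ne by linarith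
    have modR: "(v*(1+2*i)) mod N = R" unfolding vi using R0 R1 by simp
    define j where "j = nat (1+2*i)"
    have ji: "int j = 1+2*i" unfolding j_def using i0 by simp
    define x where "x = nat R"
    have xi: "int x = R" unfolding x_def using R0 by simp
    have xe: "x + (2*B+2)*j = 6*B*B+6*B+1"
    proof -
      have "int (x + (2*B+2)*j) = int (6*B*B+6*B+1)"
        using xi ji unfolding R_def M_def b_def by (simp add: algebra_simps)
      then show ?thesis by (simp only: of_nat_eq_iff)
    qed
    have oj: "odd j" using ji by presburger
    have jB: "j \<le> B+4" using ji i4 unfolding b_def by simp
    have "int j \<ge> 1" using ji i0 by simp
    then have j1: "j \<ge> 1" by simp
    have "wt3 (2*k+1) x mod 4 = 1" by (rule lemma42_aux[OF k3 hB oB oj jB j1 xe])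
    then show ?thesis unfolding modR x_def[symmetric] mk .
  qed
  show ?thesis using part1 part2 by blast
qed

end
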